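(* Let $(X,d)$ be a compact metric space with a finite Borel measure $\mu$. If a surjective map $\psi:X\to X$ is 1-Lipschitz and measure-contracting (i.e. $\mu(A)\le\mu(\psi^{-1}(A))$ for every Borel $A\subset X$), then $\psi$ is a measure-preserving isometry. *)

theory Defs
  imports "HOL-Analysis.Analysis"
begin

definition measure_preserving_map :: "'a measure \<Rightarrow> ('a \<Rightarrow> 'a) \<Rightarrow> bool" where
  "measure_preserving_map M f \<longleftrightarrow>
     f \<in> M \<rightarrow>\<^sub>M M \<and> (\<forall>A\<in>sets M. emeasure M (f -` A \<inter> space M) = emeasure M A)"

end

theory Submission
  imports Defs
begin

lemma iso_aux:
  fixes X :: "'a::metric_space set" and \<psi> :: "'a \<Rightarrow> 'a"
  assumes cX: "compact X" and sur: "\<psi> ` X = X"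
    and lip: "\<forall>x\<in>X. \<forall>y\<in>X. dist (\<psi> x) (\<psi> y) \<le> dist x y"
    and x: "x \<in> X" and y: "y \<in> X"
  shows "dist x y \<le> dist (\<psi> x) (\<psi> y)"
proof -
  have "\<forall>z\<in>X. \<exists>w. w \<in> X \<and> \<psi> w = z" using sur by force
  then obtain g where g: "\<And>z. z \<in> X \<Longrightarrow> g z \<in> X \<and> \<psi> (g z) = z" by metis
  have gX: "(g^^n) z \<in> X" if "z \<in> X" for n z
    using that g by (induction n) auto
  have psiX: "(\<psi>^^j) z \<in> X" if "z \<in> X" for j z
    using that sur by (induction j) auto
  have pl: "dist ((\<psi>^^j) a) ((\<psi>^^j) b) \<le> dist a b" if "a \<in> X" "b \<in> X" for j a b
  proof (induction j)
    case 0 then show ?case by simp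
  next
    case (Suc j)
    have "dist ((\<psi>^^Suc j) a) ((\<psi>^^Suc j) b) \<le> dist ((\<psi>^^j) a) ((\<psi>^^j) b)"
      using lip psiX that by simp
    then show ?case using Suc by linarith
  qed
  have pg: "(\<psi>^^j) ((g^^n) z) = (g^^(n-j)) z" if "z \<in> X" "j \<le> n" for j n z
    using that(2)
  proof (induction j)
    case 0 then show ?case by simp
  next
    case (Suc j)
    then have "n - j = Suc (n - Suc j)" by simp
    then have "(g^^(n-j)) z = g ((g^^(n - Suc j)) z)" by simp
    then show ?case using Suc g gX[OF that(1)] by simp
  qed
  define s where "s n = (g^^n) x" for n
  define t where "t n = (g^^n) y" for n
  have sX: "s n \<in> X" and tX: "t n \<in> X" for n using gX x y s_def t_def by auto
  have lower: "dist x y \<le> dist (s k) (t k)" for k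
    using pl[OF sX[of k] tX[of k], of k] pg[OF x, of k k] pg[OF y, of k k] unfolding s_def t_def by simp
  have sc: "seq_compact (X \<times> X)" using cX by (intro compact_imp_seq_compact compact_Times)
  have fX: "\<forall>n. (s n, t n) \<in> X \<times> X" using sX tX by auto
  obtain l r where r: "strict_mono (r::nat\<Rightarrow>nat)" "((\<lambda>n. (s n, t n)) \<circ> r) \<longlonglongrightarrow> l"
    using seq_compactE[OF sc fX] by blast
  have C: "Cauchy ((\<lambda>n. (s n, t n)) \<circ> r)" using r(2) by (rule LIMSEQ_imp_Cauchy)
  show ?thesis
  proof (rule field_le_epsilon)
    fix e :: real assume e: "0 < e"
    obtain N where N: "\<forall>m\<ge>N. \<forall>n\<ge>N. dist (((\<lambda>n. (s n, t n)) \<circ> r) m) (((\<lambda>n. (s n, t n)) \<circ> r) n) < e/2"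
      using metric_CauchyD[OF C, of "e/2"] e by auto
    define m where "m = r N"
    define n where "n = r (Suc N)"
    have mn: "m < n" using r(1) m_def n_def by (simp add: strict_mono_def)
    have d: "dist ((s m, t m)) ((s n, t n)) < e/2" using N m_def n_def by auto
    have ds: "dist (s m) (s n) < e/2" using d dist_fst_le[of "(s m, t m)" "(s n, t n)"] by simp
    have dt: "dist (t m) (t n) < e/2" using d dist_snd_le[of "(s m, t m)" "(s n, t n)"] by simp
    define k where "k = n - Suc m"
    have s1: "(\<psi>^^Suc m) (s m) = \<psi> x" using pg[OF x, of m m] s_def by simp
    have s2: "(\<psi>^^Suc m) (s n) = s k" using pg[OF x, of "Suc m" n] mn s_def k_def by simp
    have t1: "(\<psi>^^Suc m) (t m) = \<psi> y" using pg[OF y, of m m] t_def by simp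
    have t2: "(\<psi>^^Suc m) (t n) = t k" using pg[OF y, of "Suc m" n] mn t_def k_def by simp
    have a: "dist (\<psi> x) (s k) < e/2" using pl[OF sX[of m] sX[of n], of "Suc m"] s1 s2 ds by simp
    have b: "dist (\<psi> y) (t k) < e/2" using pl[OF tX[of m] tX[of n], of "Suc m"] t1 t2 dt by simp
    have "dist (s k) (t k) \<le> dist (s k) (\<psi> x) + dist (\<psi> x) (\<psi> y) + dist (\<psi> y) (t k)"
      using dist_triangle[of "s k" "t k" "\<psi> x"] dist_triangle[of "\<psi> x" "t k" "\<psi> y"] by linarith
    then show "dist x y \<le> dist (\<psi> x) (\<psi> y) + e" using lower[of k] a b by (simp add: dist_commute)
  qed
qed

theorem lemma3p8:
  fixes X :: "'a::metric_space set" and M :: "'a measure" and \<psi> :: "'a \<Rightarrow> 'a"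
  assumes "compact X"
    and "sets M = sets (restrict_space borel X)"
    and "finite_measure M"
    and "\<psi> ` X = X"
    and "\<forall>x\<in>X. \<forall>y\<in>X. dist (\<psi> x) (\<psi> y) \<le> dist x y"
    and "\<forall>A\<in>sets M. emeasure M A \<le> emeasure M (\<psi> -` A \<inter> X)"
  shows "(\<forall>x\<in>X. \<forall>y\<in>X. dist (\<psi> x) (\<psi> y) = dist x y) \<and> measure_preserving_map M \<psi>"
proof
  show "\<forall>x\<in>X. \<forall>y\<in>X. dist (\<psi> x) (\<psi> y) = dist x y"
    using iso_aux[OF assms(1,4,5)] assms(5) by (meson antisym)
next
  interpret finite_measure M by (rule assms(3))
  have sp: "space M = X" using sets_eq_imp_space_eq[OF assms(2)] by (simp add: space_restrict_space)
  have cont: "continuous_on X \<psi>"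
    unfolding continuous_on_iff
  proof (intro ballI allI impI)
    fix x e assume "x \<in> X" "(0::real) < e"
    then show "\<exists>d>0. \<forall>x'\<in>X. dist x' x < d \<longrightarrow> dist (\<psi> x') (\<psi> x) < e"
      using assms(5) by (metis le_less_trans)
  qed
  have meas: "\<psi> \<in> M \<rightarrow>\<^sub>M M"
  proof -
    have "\<psi> \<in> restrict_space borel X \<rightarrow>\<^sub>M restrict_space borel X"
      using borel_measurable_continuous_on_restrict[OF cont] assms(4)
      by (intro measurable_restrict_space2) (auto simp: space_restrict_space)
    then show ?thesis using assms(2) measurable_cong_sets by metis
  qed
  have eq: "emeasure M (\<psi> -` A \<inter> space M) = emeasure M A" if A: "A \<in> sets M" for A
  proof -
    have pA: "\<psi> -` A \<inter> space M \<in> sets M" using meas A by (rule measurable_sets)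
    have cA: "space M - A \<in> sets M" using A by auto
    have "emeasure M (space M - A) \<le> emeasure M (\<psi> -` (space M - A) \<inter> X)"
      using assms(6) cA by blast
    also have "\<psi> -` (space M - A) \<inter> X = space M - (\<psi> -` A \<inter> space M)"
      using assms(4) sp by auto
    finally have "measure M (space M - A) \<le> measure M (space M - (\<psi> -` A \<inter> space M))"
      by (simp add: emeasure_eq_measure)
    then have le: "measure M (\<psi> -` A \<inter> space M) \<le> measure M A"
      using finite_measure_compl[OF A] finite_measure_compl[OF pA] by simp
    have "measure M A \<le> measure M (\<psi> -` A \<inter> space M)"
      using assms(6) A sp by (simp add: emeasure_eq_measure)
    then show ?thesis using le by (simp add: emeasure_eq_measure)
  qed
  show "measure_preserving_map M \<psi>"
    unfolding measure_preserving_map_def using meas eq by blast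
qed

end
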